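(* Let $n$ be an integer with $n\neq\pm1$ such that $3n$ is not a square. Then the polynomial $P_n(X)=X^3-3(n+1)X+2(n+1)\in\mathbb Q[X]$ has Galois group over $\mathbb Q$ isomorphic to $S_3$. *)

theory Defs
  imports Complex_Main "HOL-Algebra.Sym_Groups" "HOL-Computational_Algebra.Polynomial"
begin

definition subfield_C :: "complex set \<Rightarrow> bool" where
  "subfield_C K \<longleftrightarrow> 0 \<in> K \<and> 1 \<in> K \<and>
     (\<forall>x\<in>K. \<forall>y\<in>K. x + y \<in> K \<and> x * y \<in> K) \<and>
     (\<forall>x\<in>K. - x \<in> K \<and> inverse x \<in> K)"

definition splitting_field_C :: "rat poly \<Rightarrow> complex set" where
  "splitting_field_C p =
     \<Inter>{K. subfield_C K \<and> {z. poly (map_poly of_rat p) z = 0} \<subseteq> K}"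

definition gal_group :: "rat poly \<Rightarrow> (complex \<Rightarrow> complex) monoid" where
  "gal_group p =
    (let K = splitting_field_C p in
     \<lparr> carrier = {\<sigma>. bij_betw \<sigma> K K \<and>
                    (\<forall>x\<in>K. \<forall>y\<in>K. \<sigma> (x + y) = \<sigma> x + \<sigma> y \<and> \<sigma> (x * y) = \<sigma> x * \<sigma> y) \<and>
                    (\<forall>r. \<sigma> (of_rat r) = of_rat r) \<and>
                    (\<forall>x. x \<notin> K \<longrightarrow> \<sigma> x = x)},
       mult = (\<lambda>\<sigma> \<tau>. \<sigma> \<circ> \<tau>),
       one = id \<rparr>)"

end

theory Submission
  imports Defs "HOL-Computational_Algebra.Fundamental_Theorem_Algebra" "HOL-Computational_Algebra.Polynomial_Factorial" "HOL-Computational_Algebra.Field_as_Ring"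
begin



definition ev :: "rat poly \<Rightarrow> complex \<Rightarrow> complex" where
  "ev f z = poly (map_poly of_rat f) z"

lemma ev_pCons[simp]: "ev (pCons r f) z = of_rat r + z * ev f z"
  by (simp add: ev_def map_poly_pCons)
lemma ev_0[simp]: "ev 0 z = 0" by (simp add: ev_def)
lemma ev_const[simp]: "ev [:r:] z = of_rat r" by simp
lemma ev_1[simp]: "ev 1 z = 1" by (simp add: one_pCons)
lemma ev_X[simp]: "ev [:0, 1:] z = z" by simp
lemma ev_add[simp]: "ev (f + g) z = ev f z + ev g z"
proof (induction f arbitrary: g)
  case (pCons a f)
  then show ?case by (cases g) (simp_all add: of_rat_add algebra_simps)
qed simp
lemma ev_smult[simp]: "ev (smult r f) z = of_rat r * ev f z"
  by (induction f) (simp_all add: of_rat_mult algebra_simps)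
lemma ev_minus[simp]: "ev (- f) z = - ev f z"
  by (induction f) (simp_all add: of_rat_minus algebra_simps)
lemma ev_diff[simp]: "ev (f - g) z = ev f z - ev g z"
  using ev_add[of f "-g" z] by simp
lemma ev_mult[simp]: "ev (f * g) z = ev f z * ev g z"
  by (induction f) (simp_all add: algebra_simps)
lemma ev_of_rat_poly: "ev f (of_rat x) = of_rat (poly f x)"
  by (induction f) (simp_all add: of_rat_add of_rat_mult)



locale cub =
  fixes n :: int and a b c :: complex
  assumes n1: "n \<noteq> 1" and n2: "n \<noteq> -1" and nsq: "\<not> (\<exists>m::int. 3 * n = m ^ 2)"
    and s1: "a + b + c = 0" and s2: "a*b + b*c + c*a = - 3 * (of_int n + 1)"
    and s3: "a*b*c = - 2 * (of_int n + 1)"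
begin

definition p :: "rat poly" where "p = [: 2 * (of_int n + 1), - 3 * (of_int n + 1), 0, 1 :]"

lemma ev_p: "ev p z = z^3 - 3 * (of_int n + 1) * z + 2 * (of_int n + 1)"
  by (simp add: p_def of_rat_add of_rat_mult of_rat_diff of_rat_minus algebra_simps power3_eq_cube)

lemma ev_p_fac: "ev p z = (z - a) * (z - b) * (z - c)"
proof -
  have c: "c = - a - b" using s1 by (simp add: algebra_simps eq_neg_iff_add_eq_0)
  show ?thesis unfolding ev_p using s2 s3 unfolding c by algebra
qed

lemma roots: "ev p z = 0 \<longleftrightarrow> z = a \<or> z = b \<or> z = c"
  by (simp add: ev_p_fac)

lemma disc: "((a-b)*(b-c)*(c-a))^2 = of_int (108 * n * (n+1)^2)"
proof -
  have c: "c = - a - b" using s1 by (simp add: algebra_simps eq_neg_iff_add_eq_0)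
  show ?thesis using s2 s3 unfolding c by simp algebra
qed

lemma n0: "n \<noteq> 0" using nsq by (metis mult_zero_right power_zero_numeral)

lemma distinct: "a \<noteq> b" "b \<noteq> c" "a \<noteq> c"
proof -
  have "of_int (108 * n * (n+1)^2) \<noteq> (0::complex)" using n0 n2
    by (metis add.inverse_inverse add_eq_0_iff2 mult_eq_0_iff of_int_eq_0_iff power_not_zero zero_neq_numeral)
  then have "(a-b)*(b-c)*(c-a) \<noteq> 0" using disc by force
  then show "a \<noteq> b" "b \<noteq> c" "a \<noteq> c" by auto
qed

end



lemma rat_repr: fixes r :: rat obtains u v :: int where "r = of_int u / of_int v" "v > 0" "coprime u v"
proof -
  obtain u v where "quotient_of r = (u, v)" by (cases "quotient_of r")
  then show ?thesis using that quotient_of_div[of r u v] quotient_of_denom_pos[of r u v] quotient_of_coprime[of r u v]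
    by auto
qed

lemma int_sq_of_rat_sq:
  fixes k :: int and r :: rat
  assumes "of_int k = r ^ 2"
  shows "\<exists>m. k = m ^ 2"
proof -
  obtain u v where r: "r = of_int u / of_int v" "v > 0" "coprime u v" by (rule rat_repr)
  have "of_int k * (of_int v)^2 = (of_int u :: rat)^2" using assms r(1,2)
    by (simp add: power_divide field_simps)
  then have e: "k * v^2 = u^2" by (metis of_int_eq_iff of_int_mult of_int_power)
  then have "v^2 dvd u^2" by (metis dvd_triv_right)
  moreover have "coprime (v^2) (u^2)" using r(3) by (simp add: coprime_commute)
  ultimately have "is_unit (v^2)" using coprime_common_divisor[of "v^2" "u^2" "v^2"] by simp
  then have "v = 1" using r(2) by (auto simp: power2_eq_square zmult_eq_1_iff)
  then show ?thesis using e by auto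
qed

context cub begin

definition D :: int where "D = 108 * n * (n+1)^2"

definition del :: complex where "del = (a-b)*(b-c)*(c-a)"

lemma del_sq: "del^2 = of_int D" using disc by (simp add: del_def D_def)

lemma del_irrat: "del \<notin> \<rat>"
proof
  assume "del \<in> \<rat>"
  then obtain q where q: "del = of_rat q" by (auto elim: Rats_cases)
  then have "of_rat (q^2) = (of_rat (of_int D) :: complex)" using del_sq by (simp add: of_rat_power)
  then have qD: "q^2 = of_int D" using of_rat_eq_iff by blast
  have nz: "(of_int n + 1 :: rat) \<noteq> 0"
  proof
    assume "(of_int n + 1 :: rat) = 0"
    then have "of_int (n+1) = (0::rat)" by simp
    then show False using n2 by simp
  qed
  have "(q / (6 * (of_int n + 1)))^2 = q^2 / (6 * (of_int n + 1))^2" by (simp add: power_divide)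
  also have "... = of_int D / (6^2 * (of_int n + 1)^2)" by (simp only: qD power_mult_distrib)
  also have "... = of_int (3*n)"
  proof -
    have "of_int D = (of_int (3*n) :: rat) * (6^2 * (of_int n+1)^2)"
      unfolding D_def by (simp add: power2_eq_square algebra_simps)
    moreover have "(6^2 * (of_int n+1)^2::rat) \<noteq> 0" using nz by simp
    ultimately show ?thesis by simp
  qed
  finally have "of_int (3*n) = (q / (6 * (of_int n + 1)))^2" by simp
  then show False using nsq int_sq_of_rat_sq by blast
qed

lemma int_no_root:
  fixes r :: int
  assumes "r^3 - 3*(n+1)*r + 2*(n+1) = 0"
  shows False
proof -
  have "8 = (3*r-2) * (27*(n+1) - 9*r^2 - 6*r - 4)" using assms
    by (simp add: algebra_simps power3_eq_cube power2_eq_square)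
  then have "(3*r-2) dvd 8" by (metis dvd_triv_left)
  then have "\<bar>3*r-2\<bar> \<le> 8" using dvd_imp_le_int[of 8 "3*r-2"] by simp
  then have "r \<in> {-2..3}" by auto
  then have "r = -2 \<or> r = -1 \<or> r = 0 \<or> r = 1 \<or> r = 2 \<or> r = 3" by auto
  then show False using assms n1 n2 n0 apply - apply (elim disjE) apply (simp_all add: power3_eq_cube) apply presburger done
qed

lemma rat_no_root: "poly p q \<noteq> 0"
proof
  assume h: "poly p q = 0"
  obtain u v where r: "q = of_int u / of_int v" "v > 0" "coprime u v" by (rule rat_repr)
  have "(of_int u)^3 - 3 * (of_int n + 1) * of_int u * (of_int v)^2 + 2 * (of_int n + 1) * (of_int v)^3 = (0::rat)"
    using h r(1,2) by (simp add: p_def field_simps power3_eq_cube power2_eq_square)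
  then have "of_int (u^3 - 3 * (n+1) * u * v^2 + 2 * (n+1) * v^3) = (0::rat)" by simp
  then have e: "u^3 - 3 * (n+1) * u * v^2 + 2 * (n+1) * v^3 = 0" by (simp only: of_int_eq_0_iff)
  have "u^3 = v * (3 * (n+1) * u * v - 2 * (n+1) * v^2)" using e by (simp add: algebra_simps power2_eq_square power3_eq_cube)
  then have "v dvd u^3" by (metis dvd_triv_left)
  moreover have "coprime v (u^3)" using r(3) by (simp add: coprime_commute)
  ultimately have "is_unit v" using coprime_common_divisor[of v "u^3" v] by simp
  then have "v = 1" using r(2) by simp
  then show False using e int_no_root[of u] by simp
qed

lemma roots_irrat: "z = a \<or> z = b \<or> z = c \<Longrightarrow> z \<notin> \<rat>"
proof
  assume "z = a \<or> z = b \<or> z = c" "z \<in> \<rat>"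
  then obtain q where q: "z = of_rat q" and "ev p z = 0" by (auto elim: Rats_cases simp: roots)
  then have "of_rat (poly p q) = (0::complex)" by (simp add: ev_of_rat_poly)
  then show False using rat_no_root by simp
qed

end



lemma deg1_form: "degree (l::'a::zero poly) \<le> 1 \<Longrightarrow> l = [:coeff l 0, coeff l 1:]"
  by (rule poly_eqI) (auto simp: coeff_pCons coeff_eq_0 split: nat.split)

lemma deg2_form: "degree (l::'a::zero poly) \<le> 2 \<Longrightarrow> l = [:coeff l 0, coeff l 1, coeff l 2:]"
  by (rule poly_eqI) (auto simp: coeff_pCons coeff_eq_0 numeral_2_eq_2 split: nat.split)

lemma lin_root:
  assumes "degree m \<le> 1" "ev m r = 0" "r \<notin> \<rat>"
  shows "m = 0"
proof -
  have m: "m = [:coeff m 0, coeff m 1:]" using deg1_form assms(1) .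
  have e: "of_rat (coeff m 0) + r * of_rat (coeff m 1) = 0" using assms(2) m by (metis ev_pCons ev_0 mult_zero_right add_0_right)
  have "coeff m 1 = 0"
  proof (rule ccontr)
    assume h: "coeff m 1 \<noteq> 0"
    then have "r = - of_rat (coeff m 0) / of_rat (coeff m 1)" using e by (simp add: field_simps eq_neg_iff_add_eq_0)
    then have "r \<in> \<rat>" by simp
    then show False using assms(3) by simp
  qed
  then have "coeff m 0 = 0" using e by simp
  then show ?thesis using m `coeff m 1 = 0` by simp
qed

lemma deg1_has_root:
  fixes l :: "rat poly"
  assumes "degree l = 1" shows "\<exists>t. poly l t = 0"
proof -
  have l: "l = [:coeff l 0, coeff l 1:]" using deg1_form[of l] assms by simp
  have "l \<noteq> 0" using assms by auto
  then have "coeff l (degree l) \<noteq> 0" by simp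
  then have "coeff l 1 \<noteq> 0" using assms by simp
  then have "poly l (- coeff l 0 / coeff l 1) = 0" by (subst l) (simp add: field_simps)
  then show ?thesis by blast
qed

context cub begin

abbreviation "rt z \<equiv> (z = a \<or> z = b \<or> z = c)"

lemma deg_p: "degree p = 3" by (simp add: p_def)
lemma p_nz: "p \<noteq> 0" using deg_p by auto

lemma quad_root:
  assumes "degree m \<le> 2" "ev m r = 0" "rt r"
  shows "m = 0"
proof (rule ccontr)
  assume mnz: "m \<noteq> 0"
  have ri: "r \<notin> \<rat>" using roots_irrat assms(3) .
  have d2: "degree m = 2"
  proof (rule ccontr)
    assume "degree m \<noteq> 2"
    then have "degree m \<le> 1" using assms(1) by auto
    then show False using lin_root assms(2) ri mnz by blast
  qed
  define s where "s = p mod m"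
  define l where "l = p div m"
  have pe: "p = l * m + s" unfolding s_def l_def by simp
  have "ev s r = 0" using pe assms(2) roots[of r] assms(3)
    by (metis add_0 ev_add ev_mult mult_zero_right)
  moreover have "s = 0 \<or> degree s < 2" using degree_mod_less[OF mnz, of p] d2 s_def by simp
  ultimately have "s = 0" using lin_root ri by fastforce
  then have pl: "p = l * m" using pe by simp
  then have "l \<noteq> 0" using p_nz by auto
  then have "degree l = 1" using pl deg_p d2 degree_mult_eq[of l m] mnz by simp
  then obtain t where "poly l t = 0" using deg1_has_root by blast
  then have "poly p t = 0" using pl by simp
  then show False using rat_no_root by blast
qed

lemma transfer:
  assumes "ev q r = 0" "rt r" "rt w"
  shows "ev q w = 0"
proof -
  define m where "m = q mod p"
  have qe: "q = (q div p) * p + m" unfolding m_def by simp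
  have epr: "ev p r = 0" "ev p w = 0" using roots assms(2,3) by auto
  have "ev (q div p * p + m) r = ev (q div p) r * ev p r + ev m r" by simp
  then have "ev q r = ev (q div p) r * ev p r + ev m r" by (simp only: qe[symmetric])
  then have "ev m r = 0" using assms(1) epr by simp
  moreover have "degree m \<le> 2" using degree_mod_less[OF p_nz, of q] deg_p m_def by auto
  ultimately have "m = 0" using quad_root assms(2) by blast
  then show ?thesis using qe epr by (metis add.right_neutral ev_mult mult_zero_right)
qed

lemma sumsq: "a^2 + b^2 + c^2 = 6 * (of_int n + 1)"
proof -
  have "a^2 + b^2 + c^2 = (a+b+c)^2 - 2*(a*b+b*c+c*a)" by (simp add: power2_eq_square algebra_simps)
  then show ?thesis using s1 s2 by simp
qed

lemma trace: "ev k a + ev k b + ev k c \<in> \<rat>"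
proof -
  define m where "m = k mod p"
  have qe: "k = (k div p) * p + m" unfolding m_def by simp
  have ev: "ev k z = ev m z" if "rt z" for z
  proof -
    have "ev (k div p * p + m) z = ev (k div p) z * ev p z + ev m z" by simp
    then have "ev k z = ev (k div p) z * ev p z + ev m z" by (simp only: qe[symmetric])
    then show ?thesis using roots[of z] that by simp
  qed
  have "degree m \<le> 2" using degree_mod_less[OF p_nz, of k] deg_p m_def by auto
  then obtain m0 m1 m2 where mf: "m = [:m0, m1, m2:]" using deg2_form by blast
  have "ev m a + ev m b + ev m c = 3 * of_rat m0 + (a+b+c) * of_rat m1 + (a^2+b^2+c^2) * of_rat m2"
    unfolding mf by (simp add: algebra_simps power2_eq_square)
  also have "... = 3 * of_rat m0 + 6 * (of_int n + 1) * of_rat m2" unfolding sumsq s1 by simp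
  also have "... \<in> \<rat>" by (intro Rats_add Rats_mult) auto
  finally show ?thesis using ev by simp
qed

lemma inv_poly:
  assumes "rt r" "ev g r \<noteq> 0"
  shows "\<exists>t. ev t r * ev g r = 1"
proof -
  define d where "d = gcd p g"
  obtain s t where st: "s * p + t * g = d" unfolding d_def using bezout_coefficients_fst_snd by blast
  have dnz: "d \<noteq> 0" using p_nz d_def by simp
  have "degree d = 0"
  proof (rule ccontr)
    assume "degree d \<noteq> 0"
    then have "degree (map_poly (of_rat :: rat \<Rightarrow> complex) d) \<noteq> 0" by (simp add: degree_map_poly)
    then have "\<not> constant (poly (map_poly (of_rat :: rat \<Rightarrow> complex) d))" by (simp add: constant_degree)
    then obtain w where w: "ev d w = 0" unfolding ev_def using fundamental_theorem_of_algebra by blast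
    have "d dvd p" "d dvd g" unfolding d_def by auto
    then obtain p' g' where "p = d * p'" "g = d * g'" by (metis dvdE)
    then have "ev p w = 0" "ev g w = 0" using w by auto
    then have "rt w" using roots by auto
    then have "ev g r = 0" using transfer `ev g w = 0` assms(1) by blast
    then show False using assms(2) by simp
  qed
  then have "d = [:coeff d 0:]" by (metis degree_0_id)
  then have ed: "ev d r = of_rat (coeff d 0)" "coeff d 0 \<noteq> 0" using dnz by (metis ev_const, metis pCons_0_0)
  have "ev s r * ev p r + ev t r * ev g r = ev d r" using st by (metis ev_add ev_mult)
  moreover have "ev p r = 0" using roots assms(1) by simp
  ultimately have "ev t r * ev g r = of_rat (coeff d 0)" using ed by simp
  then have "ev (smult (inverse (coeff d 0)) t) r * ev g r = 1" using ed(2)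
    by (simp add: of_rat_inverse mult.assoc)
  then show ?thesis by blast
qed

end



lemma subfield_int: "subfield_C K \<Longrightarrow> of_int k \<in> K"
proof -
  assume K: "subfield_C K"
  have nat: "of_nat m \<in> K" for m
    by (induction m) (use K in \<open>auto simp: subfield_C_def\<close>)
  show ?thesis
  proof (cases "k \<ge> 0")
    case True then show ?thesis using nat[of "nat k"] by simp
  next
    case False
    then have "of_int k = - (of_nat (nat (-k)) :: complex)" by simp
    then show ?thesis using nat[of "nat (-k)"] K by (simp add: subfield_C_def)
  qed
qed

lemma subfield_rat: "subfield_C K \<Longrightarrow> of_rat r \<in> K"
proof -
  assume K: "subfield_C K"
  obtain u v where r: "r = of_int u / of_int v" by (rule rat_repr)
  then have "(of_rat r :: complex) = of_int u / of_int v" by (simp add: of_rat_divide)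
  also have "... = of_int u * inverse (of_int v)" by (simp add: divide_inverse)
  finally have "(of_rat r :: complex) = of_int u * inverse (of_int v)" .
  then show ?thesis using K subfield_int[OF K, of u] subfield_int[OF K, of v] by (simp add: subfield_C_def)
qed

lemma subfield_ev: "subfield_C K \<Longrightarrow> x \<in> K \<Longrightarrow> ev f x \<in> K"
proof (induction f)
  case 0 then show ?case by (simp add: subfield_C_def)
next
  case (pCons r f)
  then show ?case using subfield_rat[OF pCons(3), of r] by (simp add: subfield_C_def)
qed

lemma subfield_diff: "subfield_C K \<Longrightarrow> x \<in> K \<Longrightarrow> y \<in> K \<Longrightarrow> x - y \<in> K"
  by (metis diff_conv_add_uminus subfield_C_def)

context cub begin

lemma c_eq: "c = - a - b" using s1 by (simp add: algebra_simps eq_neg_iff_add_eq_0)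

lemma third: "rt x \<Longrightarrow> rt y \<Longrightarrow> x \<noteq> y \<Longrightarrow> rt (- x - y)"
  using c_eq by auto

lemma dsq_gen: assumes "rt x" "rt y" "x \<noteq> y" shows "((x-y)*(y-(-x-y))*((-x-y)-x))^2 = del^2"
proof -
  define F where "F x y = ((x-y)*(y-(-x-y))*((-x-y)-x))^2" for x y :: complex
  have sw: "F x y = F y x" for x y unfolding F_def by algebra
  have cy: "F x y = F y (-x-y)" for x y unfolding F_def by algebra
  have a_eq: "a = - b - c" using c_eq by simp
  have fab: "F a b = del^2" unfolding F_def del_def by (simp add: c_eq)
  have fbc: "F b c = del^2" using fab cy[of a b] c_eq by simp
  have fca: "F c a = del^2" using fbc cy[of b c] a_eq by simp
  have "F x y = del^2" using assms fab fbc fca sw[of a b] sw[of b c] sw[of c a] by auto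
  then show ?thesis unfolding F_def .
qed

lemma pair_rel: "rt x \<Longrightarrow> rt y \<Longrightarrow> x \<noteq> y \<Longrightarrow> y^2 + x*y + x^2 = 3 * (of_int n + 1)"
proof -
  assume h: "rt x" "rt y" "x \<noteq> y"
  have "ev p x = 0" "ev p y = 0" using h roots by auto
  moreover have "(x - y) * (y^2 + x*y + x^2 - 3 * (of_int n + 1)) = ev p x - ev p y" unfolding ev_p
    by (simp add: algebra_simps power2_eq_square power3_eq_cube)
  ultimately have "(x - y) * (y^2 + x*y + x^2 - 3 * (of_int n + 1)) = 0" by simp
  then show ?thesis using h(3) by simp
qed

lemma W:
  assumes "rt x" "rt y" "x \<noteq> y" "rt x'" "rt y'" "x' \<noteq> y'"
    and e: "ev f x + ev g x * y = 0"
  shows "ev f x' + ev g x' * y' = 0"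
proof (cases "ev g x = 0")
  case True
  then have "ev f x = 0" using e by simp
  then show ?thesis using True transfer assms by (metis add_0 mult_zero_left)
next
  case False
  obtain t where t: "ev t x * ev g x = 1" using inv_poly assms(1) False by blast
  define h where "h = - (f * t)"
  have hy: "ev h x = y"
  proof -
    have "ev f x = - (ev g x * y)" using e by (simp add: eq_neg_iff_add_eq_0)
    then have "ev h x = (ev t x * ev g x) * y" unfolding h_def by (simp add: algebra_simps)
    then show ?thesis using t by simp
  qed
  define hz where "hz = - [:0,1:] - h"
  have hz: "ev hz x = - x - y" unfolding hz_def using hy by simp
  define k where "k = ([:0,1:] - h) * (h - hz) * (hz - [:0,1:])"
  have kx: "ev k x = (x-y)*(y-(-x-y))*((-x-y)-x)" unfolding k_def using hy hz by simp
  have "ev (k * k - [:of_int D:]) x = 0"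
    using dsq_gen[OF assms(1-3)] kx del_sq by (simp add: power2_eq_square)
  then have "ev (k * k - [:of_int D:]) r = 0" if "rt r" for r using transfer assms(1) that by blast
  then have "(ev k r)^2 = del^2" if "rt r" for r using that del_sq by (simp add: power2_eq_square)
  then have pm: "ev k r = del \<or> ev k r = - del" if "rt r" for r using that power2_eq_iff by blast
  define e where "e r = (if ev k r = del then 1 else -1 :: int)" for r
  have er: "ev k r = of_int (e r) * del" if "rt r" for r using pm[OF that] by (auto simp: e_def)
  have sumeq: "ev k a + ev k b + ev k c = of_int (e a + e b + e c) * del" using er
    by (simp only: of_int_add distrib_right) simp
  have "e a + e b + e c \<noteq> 0" by (auto simp: e_def)
  then have m0: "(of_int (e a + e b + e c) :: complex) \<noteq> 0" by (metis of_int_eq_0_iff)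
  have "del = (ev k a + ev k b + ev k c) / of_int (e a + e b + e c)"
    using sumeq m0 by (metis nonzero_eq_divide_eq mult.commute)
  also have "... \<in> \<rat>" using trace by (intro Rats_divide) auto
  finally show ?thesis using del_irrat by simp
qed

definition mF :: "rat poly \<Rightarrow> rat poly \<Rightarrow> rat poly \<Rightarrow> rat poly \<Rightarrow> rat poly" where
  "mF f g f' g' = f * f' - g * g' * [:- 3 * (of_int n + 1), 0, 1:]"
definition mG :: "rat poly \<Rightarrow> rat poly \<Rightarrow> rat poly \<Rightarrow> rat poly \<Rightarrow> rat poly" where
  "mG f g f' g' = f * g' + f' * g - g * g' * [:0, 1:]"

lemma mul_rep:
  assumes "rt x" "rt y" "x \<noteq> y"
  shows "(ev f x + ev g x * y) * (ev f' x + ev g' x * y) = ev (mF f g f' g') x + ev (mG f g f' g') x * y"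
proof -
  have y2: "y^2 = 3 * (of_int n + 1) - x*y - x^2" using pair_rel[OF assms] by (simp add: algebra_simps)
  have "(ev f x + ev g x * y) * (ev f' x + ev g' x * y) =
        ev f x * ev f' x + (ev f x * ev g' x + ev f' x * ev g x) * y + ev g x * ev g' x * y^2"
    by (simp add: algebra_simps power2_eq_square)
  also have "... = ev (mF f g f' g') x + ev (mG f g f' g') x * y"
    unfolding y2 mF_def mG_def by (simp add: algebra_simps power2_eq_square of_rat_mult of_rat_add of_rat_diff of_rat_minus)
  finally show ?thesis .
qed

definition L :: "complex set" where "L = {ev f a + ev g a * b | f g. True}"

lemma L_in: "ev f a + ev g a * b \<in> L" unfolding L_def by blast

lemma roots_L: "a \<in> L" "b \<in> L" "c \<in> L"
proof -
  show "a \<in> L" using L_in[of "[:0,1:]" 0] by simp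
  show "b \<in> L" using L_in[of 0 1] by simp
  show "c \<in> L" using L_in[of "-[:0,1:]" "-1"] c_eq by simp
qed

lemma rat_L: "of_rat r \<in> L" using L_in[of "[:r:]" 0] by simp

lemma L_subfield: "subfield_C L"
  unfolding subfield_C_def
proof (intro conjI ballI)
  show "0 \<in> L" using rat_L[of 0] by simp
  show "1 \<in> L" using rat_L[of 1] by simp
  fix x y assume "x \<in> L" "y \<in> L"
  then obtain f g f' g' where x: "x = ev f a + ev g a * b" and y: "y = ev f' a + ev g' a * b"
    unfolding L_def by blast
  show "x + y \<in> L" using L_in[of "f + f'" "g + g'"] unfolding x y by (simp add: algebra_simps)
  have "x * y = ev (mF f g f' g') a + ev (mG f g f' g') a * b" unfolding x y by (rule mul_rep) (auto simp: distinct)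
  then show "x * y \<in> L" by (simp add: L_in)
next
  fix x assume "x \<in> L"
  then obtain f g where x: "x = ev f a + ev g a * b" unfolding L_def by blast
  show "- x \<in> L" using L_in[of "-f" "-g"] unfolding x by simp
  show "inverse x \<in> L"
  proof (cases "x = 0")
    case True then show ?thesis using rat_L[of 0] by simp
  next
    case False
    define cj where "cj = ev f a + ev g a * c"
    have "cj \<noteq> 0"
    proof
      assume "cj = 0"
      then have "ev f a + ev g a * b = 0" unfolding cj_def using W[of a c a b f g] distinct by auto
      then show False using False x by simp
    qed
    define Nq where "Nq = f * f - f * g * [:0,1:] + g * g * [:- 3 * (of_int n + 1), 0, 1:]"
    have bc: "b * c = a^2 - 3 * (of_int n + 1)" using s2 unfolding c_eq power2_eq_square by algebra
    have "x * cj = ev Nq a"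
    proof -
      have "x * cj = ev f a * ev f a + ev f a * ev g a * (b + c) + ev g a * ev g a * (b * c)"
        unfolding x cj_def by (simp add: algebra_simps)
      also have "... = ev Nq a" unfolding bc Nq_def
        by (simp add: c_eq algebra_simps power2_eq_square of_rat_mult of_rat_add of_rat_diff of_rat_minus)
      finally show ?thesis .
    qed
    then have "ev Nq a \<noteq> 0" using False `cj \<noteq> 0` by (metis mult_eq_0_iff)
    then obtain t where t: "ev t a * ev Nq a = 1" using inv_poly by blast
    have "x * (ev t a * cj) = ev t a * (x * cj)" by (simp add: ac_simps)
    also have "... = 1" using t `x * cj = ev Nq a` by simp
    finally have "inverse x = ev t a * cj" by (rule inverse_unique)
    also have "... = ev ((f - g * [:0,1:]) * t) a + ev (- (g * t)) a * b"
      unfolding cj_def c_eq by (simp add: algebra_simps)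
    finally have eq: "inverse x = ev ((f - g * [:0,1:]) * t) a + ev (- (g * t)) a * b" .
    show ?thesis unfolding eq by (rule L_in)
  qed
qed

lemma L_min: "subfield_C K \<Longrightarrow> a \<in> K \<Longrightarrow> b \<in> K \<Longrightarrow> L \<subseteq> K"
  unfolding L_def using subfield_ev by (auto simp: subfield_C_def)

lemma root_set: "{z. poly (map_poly of_rat p) z = 0} = {a, b, c}"
  using roots by (auto simp: ev_def)

lemma split_L: "splitting_field_C p = L"
  unfolding splitting_field_C_def root_set
proof
  show "\<Inter> {K. subfield_C K \<and> {a, b, c} \<subseteq> K} \<subseteq> L" using L_subfield roots_L by blast
  show "L \<subseteq> \<Inter> {K. subfield_C K \<and> {a, b, c} \<subseteq> K}" using L_min by blast
qed

end



context cub begin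

lemma carrier_G: "\<sigma> \<in> carrier (gal_group p) \<longleftrightarrow>
   bij_betw \<sigma> L L \<and> (\<forall>x\<in>L. \<forall>y\<in>L. \<sigma> (x + y) = \<sigma> x + \<sigma> y \<and> \<sigma> (x * y) = \<sigma> x * \<sigma> y) \<and>
   (\<forall>r. \<sigma> (of_rat r) = of_rat r) \<and> (\<forall>x. x \<notin> L \<longrightarrow> \<sigma> x = x)"
  by (simp add: gal_group_def Let_def split_L)

lemma mult_G: "mult (gal_group p) = (\<circ>)"
  by (simp add: gal_group_def Let_def fun_eq_iff)

lemma L_ops: "x \<in> L \<Longrightarrow> y \<in> L \<Longrightarrow> x + y \<in> L" "x \<in> L \<Longrightarrow> y \<in> L \<Longrightarrow> x * y \<in> L"
  using L_subfield by (auto simp: subfield_C_def)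

lemma ev_L: "x \<in> L \<Longrightarrow> ev f x \<in> L"
  using subfield_ev L_subfield by blast

lemma aut_ev:
  assumes "\<sigma> \<in> carrier (gal_group p)" "u \<in> L"
  shows "\<sigma> (ev f u) = ev f (\<sigma> u)"
proof (induction f)
  case 0
  then show ?case using assms(1) unfolding carrier_G by (metis ev_0 of_rat_0)
next
  case (pCons r f)
  have h: "\<forall>x\<in>L. \<forall>y\<in>L. \<sigma> (x + y) = \<sigma> x + \<sigma> y \<and> \<sigma> (x * y) = \<sigma> x * \<sigma> y" "\<forall>r. \<sigma> (of_rat r) = of_rat r"
    using assms(1) unfolding carrier_G by blast+
  have "\<sigma> (ev (pCons r f) u) = \<sigma> (of_rat r + u * ev f u)" by simp
  also have "... = of_rat r + \<sigma> u * \<sigma> (ev f u)"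
    using h rat_L[of r] L_ops assms(2) ev_L[OF assms(2), of f] by simp
  also have "... = ev (pCons r f) (\<sigma> u)" using pCons by simp
  finally show ?case .
qed

lemma aut_rep:
  assumes "\<sigma> \<in> carrier (gal_group p)"
  shows "\<sigma> (ev f a + ev g a * b) = ev f (\<sigma> a) + ev g (\<sigma> a) * \<sigma> b"
proof -
  have h: "\<forall>x\<in>L. \<forall>y\<in>L. \<sigma> (x + y) = \<sigma> x + \<sigma> y \<and> \<sigma> (x * y) = \<sigma> x * \<sigma> y"
    using assms(1) unfolding carrier_G by blast+
  have "\<sigma> (ev f a + ev g a * b) = \<sigma> (ev f a) + \<sigma> (ev g a) * \<sigma> b"
    using h ev_L roots_L L_ops by simp
  then show ?thesis using aut_ev[OF assms] roots_L by simp
qed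

lemma aut_0: "\<sigma> \<in> carrier (gal_group p) \<Longrightarrow> \<sigma> 0 = 0"
  unfolding carrier_G by (metis of_rat_0)

lemma aut_root:
  assumes "\<sigma> \<in> carrier (gal_group p)" "rt u"
  shows "rt (\<sigma> u)"
proof -
  have "u \<in> L" using assms(2) roots_L by auto
  have "ev p (\<sigma> u) = \<sigma> (ev p u)" using aut_ev[OF assms(1) `u \<in> L`] by simp
  also have "... = \<sigma> (of_rat 0)" using assms(2) roots[of u] by (metis of_rat_0)
  also have "... = 0" using aut_0[OF assms(1)] by simp
  finally show ?thesis using roots by simp
qed

lemma aut_inj_root:
  assumes "\<sigma> \<in> carrier (gal_group p)" "rt u" "rt v" "\<sigma> u = \<sigma> v"
  shows "u = v"
proof -
  have "inj_on \<sigma> L" using assms(1) unfolding carrier_G bij_betw_def by blast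
  then show ?thesis using assms roots_L by (auto dest: inj_onD)
qed

lemma aut_eq:
  assumes "\<sigma> \<in> carrier (gal_group p)" "\<tau> \<in> carrier (gal_group p)" "\<sigma> a = \<tau> a" "\<sigma> b = \<tau> b"
  shows "\<sigma> = \<tau>"
proof
  fix u
  show "\<sigma> u = \<tau> u"
  proof (cases "u \<in> L")
    case True
    then obtain f g where "u = ev f a + ev g a * b" unfolding L_def by blast
    then show ?thesis using aut_rep[OF assms(1)] aut_rep[OF assms(2)] assms(3,4) by simp
  next
    case False
    then show ?thesis using assms(1,2) unfolding carrier_G by simp
  qed
qed

end



context cub begin

definition sig :: "complex \<Rightarrow> complex \<Rightarrow> complex \<Rightarrow> complex" where
  "sig x y u = (if u \<in> L then (let fg = (SOME fg. u = ev (fst fg) a + ev (snd fg) a * b)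
                 in ev (fst fg) x + ev (snd fg) x * y) else u)"

lemma sig_rep:
  assumes "rt x" "rt y" "x \<noteq> y"
  shows "sig x y (ev f a + ev g a * b) = ev f x + ev g x * y"
proof -
  define u where "u = ev f a + ev g a * b"
  define fg where "fg = (SOME fg. u = ev (fst fg) a + ev (snd fg) a * b)"
  have "\<exists>fg. u = ev (fst fg) a + ev (snd fg) a * b" by (rule exI[of _ "(f, g)"]) (simp add: u_def)
  then have h: "u = ev (fst fg) a + ev (snd fg) a * b" unfolding fg_def by (rule someI_ex)
  have "ev (f - fst fg) a + ev (g - snd fg) a * b = 0" using h unfolding u_def by (simp add: algebra_simps)
  then have "ev (f - fst fg) x + ev (g - snd fg) x * y = 0"
    using W[of a b x y] distinct assms by blast
  then have e: "ev (fst fg) x + ev (snd fg) x * y = ev f x + ev g x * y" by (simp add: algebra_simps)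
  have "u \<in> L" unfolding u_def by (rule L_in)
  then have "sig x y u = ev (fst fg) x + ev (snd fg) x * y" unfolding sig_def fg_def Let_def by simp
  then show ?thesis using e u_def by simp
qed

lemma cover: "rt x \<Longrightarrow> rt y \<Longrightarrow> x \<noteq> y \<Longrightarrow> rt w \<Longrightarrow> w = x \<or> w = y \<or> w = - x - y"
  using c_eq by auto

lemma third_ne: assumes "rt x" "rt y" "x \<noteq> y" shows "- x - y \<noteq> x \<and> - x - y \<noteq> y"
proof -
  have "(x = a \<and> y = b \<and> -x-y = c) \<or> (x = b \<and> y = a \<and> -x-y = c) \<or> (x = a \<and> y = c \<and> -x-y = b) \<or>
        (x = c \<and> y = a \<and> -x-y = b) \<or> (x = b \<and> y = c \<and> -x-y = a) \<or> (x = c \<and> y = b \<and> -x-y = a)"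
    using assms c_eq by auto
  then show ?thesis using distinct by auto
qed

lemma sig_aut:
  assumes xy: "rt x" "rt y" "x \<noteq> y"
  shows "sig x y \<in> carrier (gal_group p)"
proof -
  note sr = sig_rep[OF xy]
  have xyL: "x \<in> L" "y \<in> L" using xy roots_L by auto
  have add: "sig x y (u + v) = sig x y u + sig x y v" if uv0: "u \<in> L" "v \<in> L" for u v
  proof -
    obtain f g f' g' where u: "u = ev f a + ev g a * b" and v: "v = ev f' a + ev g' a * b"
      using uv0 unfolding L_def by blast
    have e1: "u + v = ev (f + f') a + ev (g + g') a * b" unfolding u v by (simp add: algebra_simps)
    have "sig x y (u + v) = ev (f + f') x + ev (g + g') x * y" unfolding e1 by (rule sr)
    also have "... = sig x y u + sig x y v" unfolding u v sr by (simp add: algebra_simps)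
    finally show ?thesis .
  qed
  have mul: "sig x y (u * v) = sig x y u * sig x y v" if uv0: "u \<in> L" "v \<in> L" for u v
  proof -
    obtain f g f' g' where u: "u = ev f a + ev g a * b" and v: "v = ev f' a + ev g' a * b"
      using uv0 unfolding L_def by blast
    have e1: "u * v = ev (mF f g f' g') a + ev (mG f g f' g') a * b" unfolding u v by (rule mul_rep) (auto simp: distinct)
    have "sig x y (u * v) = ev (mF f g f' g') x + ev (mG f g f' g') x * y" unfolding e1 by (rule sr)
    also have "... = sig x y u * sig x y v" unfolding u v sr using mul_rep[OF xy] by simp
    finally show ?thesis .
  qed
  have rat: "sig x y (of_rat r) = of_rat r" for r
    using sr[of "[:r:]" 0] by simp
  have neg: "sig x y (- u) = - sig x y u" if u0: "u \<in> L" for u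
  proof -
    obtain f g where u: "u = ev f a + ev g a * b" using u0 unfolding L_def by blast
    have e1: "- u = ev (- f) a + ev (- g) a * b" unfolding u by simp
    have "sig x y (- u) = ev (- f) x + ev (- g) x * y" unfolding e1 by (rule sr)
    then show ?thesis unfolding u sr by simp
  qed
  have into: "sig x y u \<in> L" if u0: "u \<in> L" for u
  proof -
    obtain f g where u: "u = ev f a + ev g a * b" using u0 unfolding L_def by blast
    show ?thesis unfolding u sr using ev_L xyL L_ops by simp
  qed
  have inj: "inj_on (sig x y) L"
  proof (rule inj_onI)
    fix u v assume "u \<in> L" "v \<in> L" "sig x y u = sig x y v"
    then obtain f g f' g' where u: "u = ev f a + ev g a * b" and v: "v = ev f' a + ev g' a * b"
      and e: "ev f x + ev g x * y = ev f' x + ev g' x * y"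
      unfolding L_def using sr by auto
    then have "ev (f - f') x + ev (g - g') x * y = 0" by (simp add: algebra_simps)
    then have "ev (f - f') a + ev (g - g') a * b = 0" using W[of x y a b] distinct xy by blast
    then show "u = v" unfolding u v by (simp add: algebra_simps)
  qed
  define S where "S = sig x y ` L"
  have S_sub: "subfield_C S"
    unfolding subfield_C_def
  proof (intro conjI ballI)
    show "0 \<in> S" using rat[of 0] rat_L[of 0] unfolding S_def by force
    show "1 \<in> S" using rat[of 1] rat_L[of 1] unfolding S_def by force
    fix s t assume "s \<in> S" "t \<in> S"
    then obtain u v where uv: "u \<in> L" "v \<in> L" "s = sig x y u" "t = sig x y v" unfolding S_def by blast
    show "s + t \<in> S" using add[OF uv(1,2)] L_ops(1)[OF uv(1,2)] uv(3,4) unfolding S_def by force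
    show "s * t \<in> S" using mul[OF uv(1,2)] L_ops(2)[OF uv(1,2)] uv(3,4) unfolding S_def by force
  next
    fix s assume "s \<in> S"
    then obtain u where u: "u \<in> L" "s = sig x y u" unfolding S_def by blast
    have "- u \<in> L" using u(1) L_subfield by (simp add: subfield_C_def)
    then show "- s \<in> S" using neg[OF u(1)] u(2) unfolding S_def by force
    have iu: "inverse u \<in> L" using u(1) L_subfield by (simp add: subfield_C_def)
    have "inverse s = sig x y (inverse u)"
    proof (cases "u = 0")
      case True
      then show ?thesis using u(2) rat[of 0] by simp
    next
      case False
      have "s * sig x y (inverse u) = sig x y (u * inverse u)" using mul[OF u(1) iu] u(2) by simp
      also have "... = 1" using False rat[of 1] by simp
      finally show ?thesis by (rule inverse_unique)
    qed
    then show "inverse s \<in> S" using iu unfolding S_def by force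
  qed
  have sa: "sig x y a = x" using sr[of "[:0,1:]" 0] by simp
  have sb: "sig x y b = y" using sr[of 0 1] by simp
  have sc: "sig x y c = - x - y" using sr[of "- [:0,1:]" "-1"] c_eq by simp
  have rS: "w \<in> S" if "rt w" for w
    using cover[OF xy that] sa sb sc roots_L unfolding S_def by force
  have "L \<subseteq> S" using L_min[OF S_sub] rS by blast
  then have "sig x y ` L = L" using into unfolding S_def by blast
  then have bij: "bij_betw (sig x y) L L" using inj unfolding bij_betw_def by blast
  show ?thesis unfolding carrier_G
    using bij add mul rat by (auto simp: sig_def)
qed

lemma sig_vals:
  assumes "rt x" "rt y" "x \<noteq> y"
  shows "sig x y a = x" "sig x y b = y" "sig x y c = - x - y"
  using sig_rep[OF assms, of "[:0,1:]" 0] sig_rep[OF assms, of 0 1] sig_rep[OF assms, of "- [:0,1:]" "-1"] c_eq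
  by simp_all

end



context cub begin

definition rho :: "nat \<Rightarrow> complex" where "rho i = (if i = 1 then a else if i = 2 then b else c)"
definition idx :: "complex \<Rightarrow> nat" where "idx z = (if z = a then 1 else if z = b then 2 else 3)"
definition psi :: "(complex \<Rightarrow> complex) \<Rightarrow> nat \<Rightarrow> nat" where
  "psi \<sigma> i = (if i \<in> {1..3} then idx (\<sigma> (rho i)) else i)"

lemma rho_rt: "rt (rho i)" by (simp add: rho_def)
lemma idx_rho: "i \<in> {1..3} \<Longrightarrow> idx (rho i) = i"
  using distinct by (auto simp: idx_def rho_def)
lemma rho_idx: "rt z \<Longrightarrow> rho (idx z) = z"
  using distinct by (auto simp: idx_def rho_def)
lemma idx_range: "idx z \<in> {1..3}" by (simp add: idx_def)
lemma three: "i \<in> {1..3} \<longleftrightarrow> i = 1 \<or> i = 2 \<or> i = (3::nat)" by auto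

lemma psi_perm:
  assumes "\<sigma> \<in> carrier (gal_group p)"
  shows "psi \<sigma> permutes {1..3}"
proof (rule bij_imp_permutes)
  show "psi \<sigma> x = x" if "x \<notin> {1..3}" for x using that by (simp add: psi_def del: atLeastAtMost_iff)
  have inj: "inj_on (psi \<sigma>) {1..3}"
  proof (rule inj_onI)
    fix i j assume ij: "i \<in> {1..3}" "j \<in> {1..3}" "psi \<sigma> i = psi \<sigma> j"
    then have "idx (\<sigma> (rho i)) = idx (\<sigma> (rho j))" by (simp add: psi_def)
    then have "\<sigma> (rho i) = \<sigma> (rho j)" using rho_idx aut_root[OF assms rho_rt] by metis
    then have "rho i = rho j" using aut_inj_root[OF assms rho_rt rho_rt] by blast
    then show "i = j" using idx_rho ij(1,2) by metis
  qed
  have "psi \<sigma> ` {1..3} \<subseteq> {1..3}" using idx_range by (auto simp: psi_def)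
  then have "psi \<sigma> ` {1..3} = {1..3}" using endo_inj_surj[OF _ _ inj] by simp
  then show "bij_betw (psi \<sigma>) {1..3} {1..3}" using inj by (simp add: bij_betw_def)
qed

lemma psi_mult:
  assumes "\<sigma> \<in> carrier (gal_group p)" "\<tau> \<in> carrier (gal_group p)"
  shows "psi (\<sigma> \<circ> \<tau>) = psi \<sigma> \<circ> psi \<tau>"
proof
  fix i
  show "psi (\<sigma> \<circ> \<tau>) i = (psi \<sigma> \<circ> psi \<tau>) i"
  proof (cases "i \<in> {1..3}")
    case True
    have r: "rt (\<tau> (rho i))" using aut_root[OF assms(2) rho_rt] .
    then show ?thesis using True idx_range[of "\<tau> (rho i)"] rho_idx[OF r] by (simp add: psi_def del: atLeastAtMost_iff)
  next
    case False
    then show ?thesis by (simp add: psi_def del: atLeastAtMost_iff)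
  qed
qed

lemma psi_inj:
  assumes "\<sigma> \<in> carrier (gal_group p)" "\<tau> \<in> carrier (gal_group p)" "psi \<sigma> = psi \<tau>"
  shows "\<sigma> = \<tau>"
proof (rule aut_eq[OF assms(1,2)])
  have "psi \<sigma> 1 = psi \<tau> 1" "psi \<sigma> 2 = psi \<tau> 2" using assms(3) by simp_all
  then have "idx (\<sigma> a) = idx (\<tau> a)" "idx (\<sigma> b) = idx (\<tau> b)" by (simp_all add: psi_def rho_def)
  moreover have "rt (\<sigma> a)" "rt (\<tau> a)" "rt (\<sigma> b)" "rt (\<tau> b)" using aut_root assms(1,2) by auto
  ultimately show "\<sigma> a = \<tau> a" "\<sigma> b = \<tau> b" using rho_idx by metis+
qed

lemma psi_surj:
  assumes "\<pi> permutes {1..3}"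
  shows "\<exists>\<sigma>\<in>carrier (gal_group p). psi \<sigma> = \<pi>"
proof -
  have pr: "\<pi> i \<in> {1..3}" if "i \<in> {1..3}" for i using permutes_in_image[OF assms] that by blast
  have pinj: "\<pi> i = \<pi> j \<Longrightarrow> i = j" for i j using assms by (metis permutes_inj injD)
  have rinj: "rho i = rho j \<Longrightarrow> i \<in> {1..3} \<Longrightarrow> j \<in> {1..3} \<Longrightarrow> i = j" for i j by (metis idx_rho)
  define x where "x = rho (\<pi> 1)"
  define y where "y = rho (\<pi> 2)"
  have ne: "rho (\<pi> i) \<noteq> rho (\<pi> j)" if "i \<in> {1..3}" "j \<in> {1..3}" "i \<noteq> j" for i j
  proof
    assume "rho (\<pi> i) = rho (\<pi> j)"
    then have "\<pi> i = \<pi> j" using rinj pr that(1,2) by blast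
    then show False using pinj that(3) by blast
  qed
  have xy: "rt x" "rt y" "x \<noteq> y" unfolding x_def y_def using rho_rt ne[of 1 2] by auto
  have z3: "rho (\<pi> 3) = - x - y"
  proof -
    have "rho (\<pi> 3) \<noteq> x" "rho (\<pi> 3) \<noteq> y" unfolding x_def y_def using ne[of 3 1] ne[of 3 2] by auto
    then show ?thesis using cover[OF xy rho_rt] by blast
  qed
  have "psi (sig x y) = \<pi>"
  proof
    fix i
    show "psi (sig x y) i = \<pi> i"
    proof (cases "i \<in> {1..3}")
      case True
      then have "i = 1 \<or> i = 2 \<or> i = 3" by auto
      moreover have "rho 1 = a" "rho 2 = b" "rho 3 = c" by (simp_all add: rho_def)
      ultimately have key: "sig x y (rho i) = rho (\<pi> i)"
        using sig_vals[OF xy] z3 unfolding x_def y_def by auto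
      have "psi (sig x y) i = idx (sig x y (rho i))" using True by (simp add: psi_def del: atLeastAtMost_iff)
      also have "... = \<pi> i" unfolding key using idx_rho pr True by blast
      finally show ?thesis .
    next
      case False
      then show ?thesis using assms by (simp add: psi_def permutes_not_in del: atLeastAtMost_iff)
    qed
  qed
  then show ?thesis using sig_aut[OF xy] by blast
qed

lemma gal_iso: "gal_group p \<cong> sym_group 3"
proof (rule is_isoI)
  show "psi \<in> iso (gal_group p) (sym_group 3)"
    unfolding iso_def hom_def
  proof (intro CollectI conjI)
    show "psi \<in> carrier (gal_group p) \<rightarrow> carrier (sym_group 3)"
      using psi_perm by (auto simp: sym_group_def)
    show "\<forall>x\<in>carrier (gal_group p). \<forall>y\<in>carrier (gal_group p).
            psi (x \<otimes>\<^bsub>gal_group p\<^esub> y) = psi x \<otimes>\<^bsub>sym_group 3\<^esub> psi y"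
      using psi_mult by (simp add: mult_G sym_group_def)
    show "bij_betw psi (carrier (gal_group p)) (carrier (sym_group 3))"
      unfolding bij_betw_def
    proof
      show "inj_on psi (carrier (gal_group p))" using psi_inj by (meson inj_onI)
      show "psi ` carrier (gal_group p) = carrier (sym_group 3)"
        using psi_perm psi_surj by (auto simp: sym_group_def)
    qed
  qed
qed

end



theorem lemma5p1:
  fixes n :: int
  assumes "n \<noteq> 1" and "n \<noteq> -1"
    and "\<not> (\<exists>m::int. 3 * n = m ^ 2)"
  shows "gal_group [: 2 * (of_int n + 1), - 3 * (of_int n + 1), 0, 1 :] \<cong> sym_group 3"
proof -
  define q :: "rat poly" where "q = [: 2 * (of_int n + 1), - 3 * (of_int n + 1), 0, 1 :]"
  define N :: complex where "N = of_int n + 1"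
  have evq: "ev q z = z^3 - 3 * N * z + 2 * N" for z
    by (simp add: q_def N_def of_rat_add of_rat_mult of_rat_diff of_rat_minus algebra_simps power3_eq_cube)
  have "degree (map_poly (of_rat :: rat \<Rightarrow> complex) q) = 3"
    by (simp add: degree_map_poly q_def)
  then have "\<not> constant (poly (map_poly (of_rat :: rat \<Rightarrow> complex) q))" by (simp add: constant_degree)
  then obtain a where "ev q a = 0" unfolding ev_def using fundamental_theorem_of_algebra by blast
  then have a3: "a^3 - 3 * N * a + 2 * N = 0" using evq by simp
  define s where "s = csqrt (- 3 * a^2 + 12 * N)"
  have s2: "s^2 = - 3 * a^2 + 12 * N" unfolding s_def by simp
  define b where "b = (- a + s) / 2"
  define c where "c = (- a - s) / 2"
  have v1: "a + b + c = 0" unfolding b_def c_def by (simp add: field_simps)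
  have bc: "b * c = a^2 - 3 * N" unfolding b_def c_def
    by (simp add: field_simps power2_eq_square) (use s2 in \<open>simp add: power2_eq_square algebra_simps\<close>)
  have v2: "a*b + b*c + c*a = - 3 * N"
  proof -
    have "a*b + b*c + c*a = a * (b + c) + b * c" by (simp add: algebra_simps)
    also have "b + c = - a" using v1 by (simp add: algebra_simps eq_neg_iff_add_eq_0)
    finally show ?thesis using bc by (simp add: power2_eq_square)
  qed
  have v3: "a*b*c = - 2 * N"
  proof -
    have "a*b*c = a * (a^2 - 3 * N)" using bc by (simp add: mult.assoc)
    also have "... = a^3 - 3 * N * a" by (simp add: algebra_simps power2_eq_square power3_eq_cube)
    finally show ?thesis using a3 by algebra
  qed
  interpret cub n a b c
    using assms v1 v2 v3 unfolding N_def by unfold_locales auto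
  show ?thesis using gal_iso unfolding p_def .
qed



end
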